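(* Let $\boldsymbol{x}_p=[i_p,v_p]^{\intercal}$ be the unique $T$-periodic solution of the switched system. Then $$\int_0^{T/2}i_p(t)\,dt=\frac{C}{V_{dc}}\bigl(v_p(T/2)^2-v_p(0)^2\bigr)=C\bigl(v_p(T/2)-v_p(0)\bigr),$$ and consequently $v_p(0)+v_p(T/2)=V_{dc}$.
   Context: Let $R,L,C,V_{dc},T>0$. Let $\boldsymbol{x}(t)=[i(t),v(t)]^{\intercal}$. Define $$A_1=\begin{bmatrix}-\frac RL & -\frac1L\\ \frac1C & 0\end{bmatrix},\quad A_2=\begin{bmatrix}-\frac RL & \frac1L\\ -\frac1C & 0\end{bmatrix},\quad \boldsymbol{b}_1=\begin{bmatrix}\frac{V_{dc}}L\\ 0\end{bmatrix}.$$ The switched system on $t\ge0$ is: $\boldsymbol{x}'=A_1\boldsymbol{x}+\boldsymbol{b}_1$ on each interval $[(k-1)T,(k-1)T+\frac T2]$ and $\boldsymbol{x}'=A_2\boldsymbol{x}$ on each interval $[(k-1)T+\frac T2,kT]$, $k=1,2,\dots$; solutions are continuous. The system has a unique $T$-periodic solution $\boldsymbol{x}_p$. *)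

theory Defs
  imports "HOL-Analysis.Analysis"
begin

text \<open>State x(t) = [i(t), v(t)]; component 1 is the current i, component 2 the voltage v.\<close>

definition A1 :: "real \<Rightarrow> real \<Rightarrow> real \<Rightarrow> real^2^2" where
  "A1 R L C = vector [vector [-R/L, -1/L], vector [1/C, 0]]"

definition A2 :: "real \<Rightarrow> real \<Rightarrow> real \<Rightarrow> real^2^2" where
  "A2 R L C = vector [vector [-R/L, 1/L], vector [-1/C, 0]]"

definition b1 :: "real \<Rightarrow> real \<Rightarrow> real^2" where
  "b1 L Vdc = vector [Vdc/L, 0]"

definition switched_solution ::
  "real \<Rightarrow> real \<Rightarrow> real \<Rightarrow> real \<Rightarrow> real \<Rightarrow> (real \<Rightarrow> real^2) \<Rightarrow> bool" where
  "switched_solution R L C Vdc T x \<longleftrightarrow>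
     continuous_on {0..} x \<and>
     (\<forall>k::nat. \<forall>t\<in>{real k * T .. real k * T + T/2}.
        (x has_vector_derivative (A1 R L C *v x t + b1 L Vdc))
          (at t within {real k * T .. real k * T + T/2})) \<and>
     (\<forall>k::nat. \<forall>t\<in>{real k * T + T/2 .. real (Suc k) * T}.
        (x has_vector_derivative (A2 R L C *v x t))
          (at t within {real k * T + T/2 .. real (Suc k) * T}))"

definition T_periodic_on_nonneg :: "real \<Rightarrow> (real \<Rightarrow> 'a) \<Rightarrow> bool" where
  "T_periodic_on_nonneg T x \<longleftrightarrow> (\<forall>t\<ge>0. x (t + T) = x t)"

end

theory Submission
  imports Defs
begin

lemma A1_comp: "(A1 R L C *v x + b1 L Vdc) $ 1 = (- R * x$1 - x$2 + Vdc) / L"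
  "(A1 R L C *v x + b1 L Vdc) $ 2 = x$1 / C"
  by (simp_all add: A1_def b1_def matrix_vector_mult_def sum_2 vector_2 add_divide_distrib diff_divide_distrib)

lemma A2_comp: "(A2 R L C *v x) $ 1 = (- R * x$1 + x$2) / L"
  "(A2 R L C *v x) $ 2 = - x$1 / C"
  by (simp_all add: A2_def matrix_vector_mult_def sum_2 vector_2 add_divide_distrib diff_divide_distrib)

lemma comp_deriv:
  assumes "(x has_vector_derivative D) F"
  shows "((\<lambda>t. x t $ i) has_vector_derivative D $ i) F"
  using bounded_linear.has_vector_derivative[OF bounded_linear_vec_nth assms] .

lemma shift_deriv:
  fixes f :: "real \<Rightarrow> real"
  assumes "t \<in> {0..h}" "(f has_vector_derivative D) (at (t + h) within {h..h+h})"
  shows "((\<lambda>t. f (t + h)) has_vector_derivative D) (at t within {0..h})"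
proof -
  have 1: "((\<lambda>t. t + h) has_vector_derivative 1) (at t within {0..h})"
    by (auto intro!: derivative_eq_intros)
  have im: "(\<lambda>t. t + h) ` {0..h} = {h..h+h}"
    by (simp add: image_add_atLeastAtMost')
  have "((f \<circ> (\<lambda>t. t + h)) has_vector_derivative (1 *\<^sub>R D)) (at t within {0..h})"
    by (rule vector_diff_chain_within[OF 1]) (use assms(2) im in simp)
  then show ?thesis by (simp add: o_def)
qed

lemma deriv_cont:
  assumes "\<And>t. t \<in> {a..b} \<Longrightarrow> (f has_vector_derivative f' t) (at t within {a..b})"
  shows "continuous_on {a..b} f"
  using assms continuous_on_eq_continuous_within has_vector_derivative_continuous by blast

theorem mainTheorem5:
  fixes R L C Vdc T :: real and xp :: "real \<Rightarrow> real^2"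
  assumes "R > 0" "L > 0" "C > 0" "Vdc > 0" "T > 0"
    and "switched_solution R L C Vdc T xp"
    and "T_periodic_on_nonneg T xp"
  shows "integral {0..T/2} (\<lambda>t. xp t $ 1) = C / Vdc * ((xp (T/2) $ 2)^2 - (xp 0 $ 2)^2)
       \<and> C / Vdc * ((xp (T/2) $ 2)^2 - (xp 0 $ 2)^2) = C * (xp (T/2) $ 2 - xp 0 $ 2)
       \<and> xp 0 $ 2 + xp (T/2) $ 2 = Vdc"
proof -
  define h where "h = T/2"
  have Th: "T = h + h" and hpos: "h > 0" using assms(5) by (auto simp: h_def)
  have per: "xp T = xp 0" using assms(7) unfolding T_periodic_on_nonneg_def
    by (metis add_0 order_refl)
  have D1: "\<And>t. t \<in> {0..h} \<Longrightarrow> (xp has_vector_derivative (A1 R L C *v xp t + b1 L Vdc)) (at t within {0..h})"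
    using assms(6) unfolding switched_solution_def h_def
    by (metis (no_types, lifting) add_0 mult_zero_left of_nat_0)
  have D2: "\<And>t. t \<in> {h..h+h} \<Longrightarrow> (xp has_vector_derivative (A2 R L C *v xp t)) (at t within {h..h+h})"
  proof -
    fix t assume t: "t \<in> {h..h+h}"
    have "\<forall>t\<in>{real 0 * T + T/2 .. real (Suc 0) * T}.
        (xp has_vector_derivative (A2 R L C *v xp t))
          (at t within {real 0 * T + T/2 .. real (Suc 0) * T})"
      using assms(6) unfolding switched_solution_def by blast
    moreover have "{real 0 * T + T/2 .. real (Suc 0) * T} = {h..h+h}"
      using Th h_def by simp
    ultimately show "(xp has_vector_derivative (A2 R L C *v xp t)) (at t within {h..h+h})"
      using t by metis
  qed
  define i1 where "i1 t = xp t $ 1" for t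
  define v1 where "v1 t = xp t $ 2" for t
  define di where "di t = i1 t - i1 (t + h)" for t
  define dv where "dv t = v1 t - Vdc + v1 (t + h)" for t
  have di1: "(i1 has_vector_derivative (- R * i1 t - v1 t + Vdc) / L) (at t within {0..h})"
    if "t \<in> {0..h}" for t
    using comp_deriv[OF D1[OF that], of 1] unfolding A1_comp i1_def v1_def by simp
  have dv1: "(v1 has_vector_derivative i1 t / C) (at t within {0..h})"
    if "t \<in> {0..h}" for t
    using comp_deriv[OF D1[OF that], of 2] unfolding A1_comp i1_def v1_def by simp
  have di2: "((\<lambda>t. i1 (t+h)) has_vector_derivative (- R * i1 (t+h) + v1 (t+h)) / L) (at t within {0..h})"
    if "t \<in> {0..h}" for t
    apply (rule shift_deriv[OF that])
    using comp_deriv[OF D2, of "t+h" 1] that unfolding A2_comp i1_def v1_def by simp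
  have dv2: "((\<lambda>t. v1 (t+h)) has_vector_derivative - i1 (t+h) / C) (at t within {0..h})"
    if "t \<in> {0..h}" for t
    apply (rule shift_deriv[OF that])
    using comp_deriv[OF D2, of "t+h" 2] that unfolding A2_comp i1_def v1_def by simp
  have ddi: "(di has_vector_derivative (- R * di t - dv t) / L) (at t within {0..h})"
    if "t \<in> {0..h}" for t
  proof -
    have "(di has_vector_derivative (- R * i1 t - v1 t + Vdc) / L - (- R * i1 (t+h) + v1 (t+h)) / L) (at t within {0..h})"
      unfolding di_def[abs_def] by (intro derivative_intros di1 di2 that)
    moreover have "(- R * i1 t - v1 t + Vdc) / L - (- R * i1 (t+h) + v1 (t+h)) / L = (- R * di t - dv t) / L"
      unfolding di_def dv_def by (simp add: diff_divide_distrib[symmetric] add_divide_distrib[symmetric] algebra_simps)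
    ultimately show ?thesis by simp
  qed
  have ddv: "(dv has_vector_derivative di t / C) (at t within {0..h})"
    if "t \<in> {0..h}" for t
  proof -
    have "(dv has_vector_derivative i1 t / C - 0 + - i1 (t+h) / C) (at t within {0..h})"
      unfolding dv_def[abs_def] by (intro derivative_intros dv1 dv2 that)
    moreover have "i1 t / C - 0 + - i1 (t+h) / C = di t / C"
      unfolding di_def by (simp add: diff_divide_distrib[symmetric] add_divide_distrib[symmetric] algebra_simps)
    ultimately show ?thesis by simp
  qed
  define E where "E t = L * (di t)^2 + C * (dv t)^2" for t
  have dE: "(E has_vector_derivative - (2 * R * (di t)^2)) (at t within {0..h})"
    if "t \<in> {0..h}" for t
  proof -
    have a: "(di has_real_derivative (- R * di t - dv t) / L) (at t within {0..h})"
      using ddi[OF that] by (simp add: has_real_derivative_iff_has_vector_derivative)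
    have b: "(dv has_real_derivative di t / C) (at t within {0..h})"
      using ddv[OF that] by (simp add: has_real_derivative_iff_has_vector_derivative)
    have "(E has_real_derivative L * (2 * di t * ((- R * di t - dv t) / L)) + C * (2 * dv t * (di t / C))) (at t within {0..h})"
      unfolding E_def[abs_def] by (auto intro!: derivative_eq_intros a b)
    moreover have "L * (2 * di t * ((- R * di t - dv t) / L)) + C * (2 * dv t * (di t / C)) = - (2 * R * (di t)^2)"
      using assms(2,3) by (simp add: field_simps power2_eq_square)
    ultimately show ?thesis by (simp add: has_real_derivative_iff_has_vector_derivative)
  qed
  have Eeq: "E h = E 0"
    unfolding E_def di_def dv_def i1_def v1_def using per Th
    by (simp add: algebra_simps power2_eq_square)
  have Eint: "((\<lambda>t. - (2 * R * (di t)^2)) has_integral E h - E 0) {0..h}"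
    by (rule fundamental_theorem_of_calculus) (use hpos dE in auto)
  have "((\<lambda>t. 2 * R * (di t)^2) has_integral 0) {0..h}"
    using has_integral_neg[OF Eint] Eeq by simp
  moreover have "continuous_on {0..h} (\<lambda>t. 2 * R * (di t)^2)"
    using deriv_cont[OF ddi] by (intro continuous_intros)
  ultimately have z: "2 * R * (di t)^2 = 0" if "t \<in> {0..h}" for t
    using has_integral_0_cbox_imp_0[of 0 h "\<lambda>t. 2 * R * (di t)^2" t] that hpos assms(1) by auto
  have di0: "di t = 0" if "t \<in> {0..h}" for t
    using z[OF that] assms(1) by simp
  have dvc: "dv t = dv 0" if "t \<in> {0..h}" for t
  proof -
    have i1: "((\<lambda>s. di s / C) has_integral dv t - dv 0) {0..t}"
      apply (rule fundamental_theorem_of_calculus)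
      using that apply simp
      apply (rule has_vector_derivative_within_subset[OF ddv])
      using that by auto
    have i2: "((\<lambda>s. di s / C) has_integral 0) {0..t}"
      using has_integral_cong[of "{0..t}" "\<lambda>s. di s / C" "\<lambda>s. 0" 0] that di0 by auto
    have "dv t - dv 0 = 0" by (rule has_integral_unique[OF i1 i2])
    then show ?thesis by simp
  qed
  have "((\<lambda>t. (- R * di t - dv t) / L) has_integral di h - di 0) {0..h}"
    by (rule fundamental_theorem_of_calculus) (use hpos ddi in auto)
  moreover have "((\<lambda>t. (- R * di t - dv t) / L) has_integral (- dv 0 / L) * h) {0..h}"
  proof -
    have "((\<lambda>t. - dv 0 / L) has_integral (- dv 0 / L) * h) {0..h}"
      using has_integral_const_real[of "- dv 0 / L" 0 h] hpos by (simp add: mult.commute)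
    moreover have eqs: "\<And>t. t \<in> {0..h} \<Longrightarrow> (- R * di t - dv t) / L = - dv 0 / L"
    proof -
      fix t assume t: "t \<in> {0..h}"
      show "(- R * di t - dv t) / L = - dv 0 / L" unfolding di0[OF t] dvc[OF t] by simp
    qed
    ultimately show ?thesis
      using has_integral_cong[of "{0..h}" "\<lambda>t. (- R * di t - dv t) / L" "\<lambda>t. - dv 0 / L", OF eqs] by blast
  qed
  ultimately have "di h - di 0 = (- dv 0 / L) * h" by (rule has_integral_unique)
  then have "dv 0 = 0" using di0[of h] di0[of 0] hpos assms(2) by simp
  then have key: "xp 0 $ 2 + xp (T/2) $ 2 = Vdc"
    unfolding dv_def v1_def h_def by simp
  have "((\<lambda>t. i1 t / C) has_integral v1 h - v1 0) {0..h}"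
    by (rule fundamental_theorem_of_calculus) (use hpos dv1 in auto)
  then have "((\<lambda>t. i1 t) has_integral C * (v1 h - v1 0)) {0..h}"
    using has_integral_mult_right[of "\<lambda>t. i1 t / C" _ _ C] assms(3) by simp
  then have int: "integral {0..T/2} (\<lambda>t. xp t $ 1) = C * (xp (T/2) $ 2 - xp 0 $ 2)"
    unfolding i1_def v1_def h_def by (simp add: integral_unique)
  have sq: "C / Vdc * ((xp (T/2) $ 2)^2 - (xp 0 $ 2)^2) = C * (xp (T/2) $ 2 - xp 0 $ 2)"
  proof -
    have "(xp (T/2) $ 2)^2 - (xp 0 $ 2)^2 = (xp (T/2) $ 2 - xp 0 $ 2) * Vdc"
    proof -
      have "(xp (T/2) $ 2)^2 - (xp 0 $ 2)^2 = (xp (T/2) $ 2 - xp 0 $ 2) * (xp 0 $ 2 + xp (T/2) $ 2)"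
        by (simp add: power2_eq_square algebra_simps)
      then show ?thesis unfolding key .
    qed
    then show ?thesis using assms(4) by simp
  qed
  show ?thesis using int sq key by simp
qed

end
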